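(* Let $\mathsf{T}$ be a rooted plane tree and $\delta\in\mathcal{O}(\mathsf{T})$. For all $v\in\mathsf{T}$, we have $\mathsf{Pop}(\delta)(v)\subseteq\delta(v)$. Moreover, for each child $u$ of $v$ with $u\in\delta(v)$, we have $|\Delta_{\mathsf{Pop}(\delta)(v)}(u)|\leq|\Delta_{\delta(v)}(u)|-1$.
   Context: A rooted plane tree $\mathsf{T}$ is a finite tree with a distinguished root, regarded as a poset $\leq_\mathsf{T}$ in which $v'\leq_\mathsf{T} v$ iff $v$ lies on the path from $v'$ to the root; the children of $v$ are the nodes covered by $v$. An ornament is a nonempty set of nodes inducing a connected subgraph. For a set $S$ of nodes and a node $u$, $\Delta_S(u)=\{w\in S:w\leq_\mathsf{T} u\}$ (empty if no such $w$). An ornamentation is a map $\delta$ from $\mathsf{T}$ to ornaments such that the unique maximal element of $\delta(v)$ is $v$ and any two sets $\delta(v),\delta(v')$ are nested or disjoint. $\mathcal{O}(\mathsf{T})$ is the set of ornamentations ordered by $\delta\leq\delta'$ iff $\delta(v)\subseteq\delta'(v)$ for all $v$; it is a lattice with meet given by pointwise intersection. $\mathsf{Pop}(\delta)=\bigwedge(\{\delta\}\cup\{\delta':\delta'\lessdot\delta\})$, where $\lessdot$ is the cover relation. *)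

theory Defs
  imports Main
begin

text \<open>A rooted tree on the finite node set V with root r is given by a parent map
  par (with the convention par r = r); every node reaches the root by iterating par.\<close>

definition rooted_tree :: "'a set \<Rightarrow> 'a \<Rightarrow> ('a \<Rightarrow> 'a) \<Rightarrow> bool" where
  "rooted_tree V r par \<longleftrightarrow> finite V \<and> r \<in> V \<and> par r = r \<and>
     (\<forall>v\<in>V. par v \<in> V) \<and> (\<forall>v\<in>V. \<exists>k. (par ^^ k) v = r)"

definition tree_le :: "('a \<Rightarrow> 'a) \<Rightarrow> 'a \<Rightarrow> 'a \<Rightarrow> bool" where
  "tree_le par v' v \<longleftrightarrow> (\<exists>k. (par ^^ k) v' = v)"

definition is_child :: "'a set \<Rightarrow> 'a \<Rightarrow> ('a \<Rightarrow> 'a) \<Rightarrow> 'a \<Rightarrow> 'a \<Rightarrow> bool" where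
  "is_child V r par u v \<longleftrightarrow> u \<in> V \<and> u \<noteq> r \<and> par u = v"

definition adj_in :: "'a set \<Rightarrow> 'a \<Rightarrow> ('a \<Rightarrow> 'a) \<Rightarrow> 'a set \<Rightarrow> 'a \<Rightarrow> 'a \<Rightarrow> bool" where
  "adj_in V r par S x y \<longleftrightarrow> x \<in> S \<and> y \<in> S \<and> (is_child V r par x y \<or> is_child V r par y x)"

definition ornament :: "'a set \<Rightarrow> 'a \<Rightarrow> ('a \<Rightarrow> 'a) \<Rightarrow> 'a set \<Rightarrow> bool" where
  "ornament V r par S \<longleftrightarrow> S \<noteq> {} \<and> S \<subseteq> V \<and>
     (\<forall>x\<in>S. \<forall>y\<in>S. (adj_in V r par S)\<^sup>*\<^sup>* x y)"

definition Delta :: "('a \<Rightarrow> 'a) \<Rightarrow> 'a set \<Rightarrow> 'a \<Rightarrow> 'a set" where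
  "Delta par S u = {w \<in> S. tree_le par w u}"

text \<open>Ornamentations; functions are taken to be {} outside V so that they are determined
  by their values on the tree.\<close>
definition ornamentation :: "'a set \<Rightarrow> 'a \<Rightarrow> ('a \<Rightarrow> 'a) \<Rightarrow> ('a \<Rightarrow> 'a set) \<Rightarrow> bool" where
  "ornamentation V r par \<delta> \<longleftrightarrow>
     (\<forall>v. v \<notin> V \<longrightarrow> \<delta> v = {}) \<and>
     (\<forall>v\<in>V. ornament V r par (\<delta> v) \<and>
        {m \<in> \<delta> v. \<forall>w\<in>\<delta> v. tree_le par m w \<longrightarrow> w = m} = {v}) \<and>
     (\<forall>v\<in>V. \<forall>v'\<in>V. \<delta> v \<subseteq> \<delta> v' \<or> \<delta> v' \<subseteq> \<delta> v \<or> \<delta> v \<inter> \<delta> v' = {})"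

definition orn_le :: "'a set \<Rightarrow> ('a \<Rightarrow> 'a set) \<Rightarrow> ('a \<Rightarrow> 'a set) \<Rightarrow> bool" where
  "orn_le V \<delta> \<delta>' \<longleftrightarrow> (\<forall>v\<in>V. \<delta> v \<subseteq> \<delta>' v)"

definition orn_covered :: "'a set \<Rightarrow> 'a \<Rightarrow> ('a \<Rightarrow> 'a) \<Rightarrow> ('a \<Rightarrow> 'a set) \<Rightarrow> ('a \<Rightarrow> 'a set) \<Rightarrow> bool" where
  "orn_covered V r par \<delta>' \<delta> \<longleftrightarrow>
     ornamentation V r par \<delta>' \<and> ornamentation V r par \<delta> \<and>
     orn_le V \<delta>' \<delta> \<and> \<not> orn_le V \<delta> \<delta>' \<and>
     \<not> (\<exists>\<delta>''. ornamentation V r par \<delta>'' \<and> orn_le V \<delta>' \<delta>'' \<and> orn_le V \<delta>'' \<delta> \<and>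
            \<not> orn_le V \<delta>'' \<delta>' \<and> \<not> orn_le V \<delta> \<delta>'')"

text \<open>Pop: meet of \<delta> and all elements it covers; the meet in O(T) is pointwise intersection.\<close>
definition Pop :: "'a set \<Rightarrow> 'a \<Rightarrow> ('a \<Rightarrow> 'a) \<Rightarrow> ('a \<Rightarrow> 'a set) \<Rightarrow> 'a \<Rightarrow> 'a set" where
  "Pop V r par \<delta> v = \<Inter> {\<delta>' v | \<delta>'. \<delta>' = \<delta> \<or> orn_covered V r par \<delta>' \<delta>}"

end

theory Submission
  imports Defs
begin

lemma cross:
  assumes "par u = v" "tree_le par x u" "\<not> tree_le par y u"
    "is_child V r par x y \<or> is_child V r par y x"
  shows "x = u \<and> y = v"
proof -
  obtain k where k: "(par ^^ k) x = u" using assms(2) unfolding tree_le_def by blast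
  show ?thesis
  proof (cases "is_child V r par x y")
    case True
    then have px: "par x = y" unfolding is_child_def by simp
    show ?thesis
    proof (cases k)
      case 0 then show ?thesis using k px assms(1) by simp
    next
      case (Suc j)
      then have "(par ^^ j) y = u" using k px by (simp add: funpow_Suc_right del: funpow.simps)
      then show ?thesis using assms(3) unfolding tree_le_def by blast
    qed
  next
    case False
    then have "par y = x" using assms(4) unfolding is_child_def by blast
    then have "(par ^^ Suc k) y = u" using k by (simp add: funpow_Suc_right del: funpow.simps)
    then show ?thesis using assms(3) unfolding tree_le_def by blast
  qed
qed

lemma path_cross:
  assumes "(adj_in V r par T)\<^sup>*\<^sup>* a b" "tree_le par a u" "\<not> tree_le par b u"
  shows "\<exists>x y. adj_in V r par T x y \<and> tree_le par x u \<and> \<not> tree_le par y u"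
  using assms
proof (induction rule: rtranclp_induct)
  case base then show ?case by simp
next
  case (step y z)
  show ?case
  proof (cases "tree_le par y u")
    case True then show ?thesis using step by blast
  next
    case False then show ?thesis using step by blast
  qed
qed

lemma adj_sym: "adj_in V r par S x y \<Longrightarrow> adj_in V r par S y x"
  unfolding adj_in_def by blast

lemma rt_sym:
  assumes "(adj_in V r par S)\<^sup>*\<^sup>* x y" shows "(adj_in V r par S)\<^sup>*\<^sup>* y x"
  using assms
proof (induction rule: rtranclp_induct)
  case base then show ?case by simp
next
  case (step y z)
  then show ?case using adj_sym converse_rtranclp_into_rtranclp by metis
qed

lemma conn_to_v:
  assumes "(adj_in V r par S)\<^sup>*\<^sup>* x v" "x \<notin> B" "B = {x. tree_le par x u}" "par u = v"
  shows "(adj_in V r par (S - B))\<^sup>*\<^sup>* x v"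
  using assms(1,2)
proof (induction rule: converse_rtranclp_induct)
  case base then show ?case by simp
next
  case (step x y)
  show ?case
  proof (cases "y \<in> B")
    case False
    then have "adj_in V r par (S - B) x y" using step(1) \<open>x \<notin> B\<close> unfolding adj_in_def by blast
    then show ?thesis using step False converse_rtranclp_into_rtranclp by metis
  next
    case True
    have "is_child V r par y x \<or> is_child V r par x y" using step(1) unfolding adj_in_def by blast
    then have "y = u \<and> x = v" using cross[of par u v y x V r] True \<open>x \<notin> B\<close> assms(3,4) by blast
    then show ?thesis by simp
  qed
qed

lemma not_above:
  assumes "rooted_tree V r par" "is_child V r par u v"
  shows "\<not> tree_le par v u"
proof
  assume "tree_le par v u"
  then obtain k where k: "(par ^^ k) v = u" unfolding tree_le_def by blast
  have pu: "par u = v" and uV: "u \<in> V" and ur: "u \<noteq> r" using assms(2) unfolding is_child_def by auto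
  have cyc: "(par ^^ Suc k) u = u" using k pu by (simp add: funpow_Suc_right del: funpow.simps)
  have cn: "(par ^^ (n * Suc k)) u = u" for n
  proof (induction n)
    case 0 then show ?case by simp
  next
    case (Suc n)
    have e: "Suc n * Suc k = Suc k + n * Suc k" by simp
    have "(par ^^ (Suc n * Suc k)) u = (par ^^ Suc k) ((par ^^ (n * Suc k)) u)"
      by (simp only: e funpow_add comp_apply)
    then show ?case using Suc cyc by simp
  qed
  obtain m where m: "(par ^^ m) u = r" using assms(1) uV unfolding rooted_tree_def by blast
  have rr: "(par ^^ j) r = r" for j
    using assms(1) unfolding rooted_tree_def by (induction j) auto
  have "m \<le> m * Suc k" by simp
  then obtain d where d: "m * Suc k = d + m" using le_Suc_ex by (metis add.commute le_add_diff_inverse)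
  have "(par ^^ (m * Suc k)) u = r"
    by (simp only: d funpow_add comp_apply m rr)
  then show False using cn[of m] ur by simp
qed

theorem lemma2p6:
  fixes V :: "'a set" and r :: 'a and par :: "'a \<Rightarrow> 'a" and \<delta> :: "'a \<Rightarrow> 'a set" and v :: 'a
  assumes "rooted_tree V r par"
    and "ornamentation V r par \<delta>"
    and "v \<in> V"
  shows "Pop V r par \<delta> v \<subseteq> \<delta> v \<and>
    (\<forall>u. is_child V r par u v \<and> u \<in> \<delta> v \<longrightarrow>
       card (Delta par (Pop V r par \<delta> v) u) \<le> card (Delta par (\<delta> v) u) - 1)"
proof (intro conjI allI impI)
  show "Pop V r par \<delta> v \<subseteq> \<delta> v" unfolding Pop_def by blast
next
  fix u assume uc: "is_child V r par u v \<and> u \<in> \<delta> v"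
  have pu: "par u = v" using uc unfolding is_child_def by simp
  have fin: "finite V" using assms(1) unfolding rooted_tree_def by simp
  have orn: "\<And>w. w \<in> V \<Longrightarrow> ornament V r par (\<delta> w)"
    and mx: "\<And>w. w \<in> V \<Longrightarrow> {m \<in> \<delta> w. \<forall>x\<in>\<delta> w. tree_le par m x \<longrightarrow> x = m} = {w}"
    and nest: "\<And>w w'. w \<in> V \<Longrightarrow> w' \<in> V \<Longrightarrow> \<delta> w \<subseteq> \<delta> w' \<or> \<delta> w' \<subseteq> \<delta> w \<or> \<delta> w \<inter> \<delta> w' = {}"
    and outV: "\<And>w. w \<notin> V \<Longrightarrow> \<delta> w = {}"
    using assms(2) unfolding ornamentation_def by blast+
  have sub: "\<delta> w \<subseteq> V" for w
  proof (cases "w \<in> V")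
    case True then show ?thesis using orn[OF True] unfolding ornament_def by blast
  next
    case False then show ?thesis using outV[OF False] by simp
  qed
  have conn: "(adj_in V r par (\<delta> w))\<^sup>*\<^sup>* x y" if "w \<in> V" "x \<in> \<delta> w" "y \<in> \<delta> w" for w x y
    using orn[OF that(1)] that(2,3) unfolding ornament_def by blast
  have mxw: "w \<in> {m \<in> \<delta> w. \<forall>x\<in>\<delta> w. tree_le par m x \<longrightarrow> x = m}" if "w \<in> V" for w
    unfolding mx[OF that] by simp
  have self: "w \<in> \<delta> w" if "w \<in> V" for w using mxw[OF that] by simp
  have vmax: "x = v" if "x \<in> \<delta> v" "tree_le par v x" for x
    using mxw[OF assms(3)] that by simp
  define B where "B = {x. tree_le par x u}"
  have "\<not> tree_le par v u" using not_above[OF assms(1)] uc by blast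
  then have vB: "v \<notin> B" unfolding B_def by simp
  have "tree_le par u u" unfolding tree_le_def by (rule exI[of _ 0]) simp
  then have uB: "u \<in> B" unfolding B_def by simp
  define S' where "S' = \<delta> v - B"
  define d2 where "d2 = \<delta>(v := S')"
  have vS': "v \<in> S'" using self[OF assms(3)] vB unfolding S'_def by simp
  have S'orn: "ornament V r par S'"
  proof -
    have "(adj_in V r par S')\<^sup>*\<^sup>* x y" if "x \<in> S'" "y \<in> S'" for x y
    proof -
      have vd: "v \<in> \<delta> v" using self[OF assms(3)] .
      have "(adj_in V r par S')\<^sup>*\<^sup>* x v"
        unfolding S'_def
        by (rule conn_to_v[OF conn[OF assms(3) _ vd] _ B_def pu]) (use that in \<open>auto simp: S'_def\<close>)
      moreover have "(adj_in V r par S')\<^sup>*\<^sup>* y v"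
        unfolding S'_def
        by (rule conn_to_v[OF conn[OF assms(3) _ vd] _ B_def pu]) (use that in \<open>auto simp: S'_def\<close>)
      ultimately show ?thesis using rt_sym by (metis rtranclp_trans)
    qed
    then show ?thesis unfolding ornament_def using vS' sub[of v] unfolding S'_def by blast
  qed
  have trans_le: "\<And>a b c. tree_le par a b \<Longrightarrow> tree_le par b c \<Longrightarrow> tree_le par a c"
    unfolding tree_le_def by (metis funpow_add comp_apply)
  have S'mx: "{m \<in> S'. \<forall>x\<in>S'. tree_le par m x \<longrightarrow> x = m} = {v}"
  proof (intro equalityI subsetI)
    fix m assume "m \<in> {m \<in> S'. \<forall>x\<in>S'. tree_le par m x \<longrightarrow> x = m}"
    then have mS: "m \<in> S'" and mm: "\<forall>x\<in>S'. tree_le par m x \<longrightarrow> x = m" by auto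
    have "\<forall>x\<in>\<delta> v. tree_le par m x \<longrightarrow> x = m"
    proof (intro ballI impI)
      fix x assume "x \<in> \<delta> v" "tree_le par m x"
      moreover have "x \<notin> B"
      proof
        assume "x \<in> B" then have "m \<in> B" using trans_le \<open>tree_le par m x\<close> unfolding B_def by blast
        then show False using mS unfolding S'_def by blast
      qed
      ultimately show "x = m" using mm unfolding S'_def by blast
    qed
    then show "m \<in> {v}" using mx[OF assms(3)] mS unfolding S'_def by blast
  next
    fix m assume "m \<in> {v}"
    then show "m \<in> {m \<in> S'. \<forall>x\<in>S'. tree_le par m x \<longrightarrow> x = m}"
      using vS' vmax unfolding S'_def by blast
  qed
  have nestv: "\<delta> w \<subseteq> S' \<or> S' \<subseteq> \<delta> w \<or> \<delta> w \<inter> S' = {}" if wV: "w \<in> V" "w \<noteq> v" for w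
  proof -
    consider "\<delta> v \<subseteq> \<delta> w" | "\<delta> v \<inter> \<delta> w = {}" | "\<delta> w \<subseteq> \<delta> v" using nest[OF assms(3) wV(1)] by blast
    then show ?thesis
    proof cases
      case 1 then show ?thesis unfolding S'_def by blast
    next
      case 2 then show ?thesis unfolding S'_def by blast
    next
      case 3
      show ?thesis
      proof (rule ccontr)
        assume "\<not> ?thesis"
        then obtain a b where a: "a \<in> \<delta> w" "a \<notin> S'" and b: "b \<in> \<delta> w" "b \<in> S'" by blast
        have aB: "tree_le par a u" using a 3 unfolding S'_def B_def by blast
        have bB: "\<not> tree_le par b u" using b unfolding S'_def B_def by blast
        obtain x y where xy: "adj_in V r par (\<delta> w) x y" "tree_le par x u" "\<not> tree_le par y u"
          using path_cross[OF conn[OF wV(1) a(1) b(1)] aB bB] by blast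
        have "y = v" using cross[OF pu xy(2,3)] xy(1) unfolding adj_in_def by blast
        then have vw: "v \<in> \<delta> w" using xy(1) unfolding adj_in_def by blast
        have "\<forall>x\<in>\<delta> w. tree_le par v x \<longrightarrow> x = v" using vmax 3 by blast
        then have "v = w" using mx[OF wV(1)] vw by blast
        then show False using wV(2) by simp
      qed
    qed
  qed
  have d2orn: "ornamentation V r par d2"
    unfolding ornamentation_def d2_def
  proof (intro conjI ballI allI impI)
    fix w assume "w \<notin> V" then show "(\<delta>(v := S')) w = {}" using outV assms(3) by auto
  next
    fix w assume "w \<in> V"
    then show "ornament V r par ((\<delta>(v := S')) w)" using orn S'orn by auto
  next
    fix w assume "w \<in> V"
    then show "{m \<in> (\<delta>(v := S')) w. \<forall>x\<in>(\<delta>(v := S')) w. tree_le par m x \<longrightarrow> x = m} = {w}"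
      using mx S'mx by (cases "w = v") auto
  next
    fix w w' assume "w \<in> V" "w' \<in> V"
    then show "(\<delta>(v := S')) w \<subseteq> (\<delta>(v := S')) w' \<or> (\<delta>(v := S')) w' \<subseteq> (\<delta>(v := S')) w \<or>
       (\<delta>(v := S')) w \<inter> (\<delta>(v := S')) w' = {}"
    proof -
      consider "w = v" "w' = v" | "w = v" "w' \<noteq> v" | "w \<noteq> v" "w' = v" | "w \<noteq> v" "w' \<noteq> v" by blast
      then show ?thesis
      proof cases
        case 1 then show ?thesis by simp
      next
        case 2 then show ?thesis using nestv[OF \<open>w' \<in> V\<close> 2(2)] by (auto simp: Int_commute)
      next
        case 3 then show ?thesis using nestv[OF \<open>w \<in> V\<close> 3(1)] by auto
      next
        case 4 then show ?thesis using nest[OF \<open>w \<in> V\<close> \<open>w' \<in> V\<close>] by simp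
      qed
    qed
  qed
  have d2le: "orn_le V d2 \<delta>" unfolding orn_le_def d2_def S'_def by auto
  have d2nle: "\<not> orn_le V \<delta> d2" unfolding orn_le_def d2_def S'_def using uc uB assms(3) by auto
  define C where "C = (\<lambda>e. ornamentation V r par e \<and> orn_le V d2 e \<and> orn_le V e \<delta> \<and> \<not> orn_le V \<delta> e)"
  define f where "f = (\<lambda>e::'a \<Rightarrow> 'a set. \<Sum>w\<in>V. card (e w))"
  have "orn_le V d2 d2" unfolding orn_le_def by simp
  then have Cd2: "C d2" unfolding C_def using d2orn d2le d2nle by blast
  have bnd: "\<forall>e. C e \<longrightarrow> f e < card V * card V + 1"
  proof (intro allI impI)
    fix e assume "C e"
    then have "\<And>w. w \<in> V \<Longrightarrow> card (e w) \<le> card V" unfolding C_def orn_le_def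
      by (meson card_mono fin order.trans sub)
    then have "f e \<le> (\<Sum>w\<in>V. card V)" unfolding f_def by (intro sum_mono) auto
    then show "f e < card V * card V + 1" by simp
  qed
  obtain \<epsilon> where eC: "C \<epsilon>" and emax: "\<forall>e. C e \<longrightarrow> f e \<le> f \<epsilon>"
    using Lattices_Big.ex_has_greatest_nat[of C d2 f, OF Cd2 bnd] by blast
  have cov: "orn_covered V r par \<epsilon> \<delta>"
    unfolding orn_covered_def
  proof (intro conjI notI)
    show "ornamentation V r par \<epsilon>" "orn_le V \<epsilon> \<delta>" using eC unfolding C_def by auto
    show "ornamentation V r par \<delta>" by (rule assms(2))
    show "orn_le V \<delta> \<epsilon> \<Longrightarrow> False" using eC unfolding C_def by auto
  next
    assume "\<exists>d3. ornamentation V r par d3 \<and> orn_le V \<epsilon> d3 \<and> orn_le V d3 \<delta> \<and> \<not> orn_le V d3 \<epsilon> \<and> \<not> orn_le V \<delta> d3"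
    then obtain d3 where d3: "ornamentation V r par d3" "orn_le V \<epsilon> d3" "orn_le V d3 \<delta>" "\<not> orn_le V d3 \<epsilon>" "\<not> orn_le V \<delta> d3"
      by blast
    have "C d3" using d3 eC unfolding C_def orn_le_def by blast
    then have le: "f d3 \<le> f \<epsilon>" using emax by blast
    have "f \<epsilon> < f d3" unfolding f_def
    proof (rule sum_strict_mono_ex1[OF fin])
      have d3s: "\<And>w. d3 w \<subseteq> V" using d3(1) unfolding ornamentation_def ornament_def by (metis empty_subsetI)
      show "\<forall>x\<in>V. card (\<epsilon> x) \<le> card (d3 x)"
        using d3(2) unfolding orn_le_def by (meson card_mono d3s fin rev_finite_subset)
      obtain w where "w \<in> V" "\<not> d3 w \<subseteq> \<epsilon> w" using d3(4) unfolding orn_le_def by blast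
      moreover then have "\<epsilon> w \<subset> d3 w" using d3(2) unfolding orn_le_def by blast
      ultimately show "\<exists>a\<in>V. card (\<epsilon> a) < card (d3 a)"
        by (meson psubset_card_mono d3s fin rev_finite_subset)
    qed
    then show False using le by simp
  qed
  have PopE: "Pop V r par \<delta> v \<subseteq> \<epsilon> v" unfolding Pop_def using cov by blast
  have sub1: "Delta par (Pop V r par \<delta> v) u \<subseteq> Delta par (\<epsilon> v) u"
    using PopE unfolding Delta_def by blast
  have eled: "orn_le V \<epsilon> \<delta>" and d2e: "orn_le V d2 \<epsilon>" and ne: "\<not> orn_le V \<delta> \<epsilon>"
    using eC unfolding C_def by auto
  obtain w x where wx: "w \<in> V" "x \<in> \<delta> w" "x \<notin> \<epsilon> w" using ne unfolding orn_le_def by blast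
  have "w = v"
  proof (rule ccontr)
    assume "w \<noteq> v"
    moreover have "d2 w \<subseteq> \<epsilon> w" using d2e wx(1) unfolding orn_le_def by blast
    ultimately have "\<delta> w \<subseteq> \<epsilon> w" unfolding d2_def by simp
    then show False using wx by blast
  qed
  moreover have "d2 v \<subseteq> \<epsilon> v" using d2e assms(3) unfolding orn_le_def by blast
  ultimately have xB: "x \<in> B" using wx unfolding d2_def S'_def by auto
  have psub: "Delta par (\<epsilon> v) u \<subset> Delta par (\<delta> v) u"
  proof -
    have "\<epsilon> v \<subseteq> \<delta> v" using eled assms(3) unfolding orn_le_def by blast
    then have "Delta par (\<epsilon> v) u \<subseteq> Delta par (\<delta> v) u" unfolding Delta_def by blast
    moreover have "x \<in> Delta par (\<delta> v) u" "x \<notin> Delta par (\<epsilon> v) u"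
      using wx xB \<open>w = v\<close> unfolding Delta_def B_def by auto
    ultimately show ?thesis by blast
  qed
  have "Delta par (\<delta> v) u \<subseteq> V" using sub[of v] unfolding Delta_def by blast
  then have finD: "finite (Delta par (\<delta> v) u)" using fin by (rule finite_subset)
  have "card (Delta par (\<epsilon> v) u) < card (Delta par (\<delta> v) u)" by (rule psubset_card_mono[OF finD psub])
  moreover have "card (Delta par (Pop V r par \<delta> v) u) \<le> card (Delta par (\<epsilon> v) u)"
  proof (rule card_mono[OF _ sub1])
    show "finite (Delta par (\<epsilon> v) u)" using finD psub by (meson psubset_imp_subset finite_subset)
  qed
  ultimately show "card (Delta par (Pop V r par \<delta> v) u) \<le> card (Delta par (\<delta> v) u) - 1" by linarith
qed

end
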